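(* Let $\varepsilon_1>0$. For a dataset $D=\{(x_i,y_i)\}_{i=1}^n$ with $x_i,y_i\in[0,1]$, let $S_{x^2}=\sum_i x_i^2$, $S_{x-x^2}=\sum_i (x_i-x_i^2)$, $S_{1-x}=\sum_i(1-x_i)$, and let $Z_{11},Z_{12},Z_{13}$ be i.i.d. $\mathrm{Lap}(1/\varepsilon_1)$ random variables. Then the randomized mechanism releasing $(\tilde S_{x^2},\tilde S_{x-x^2},\tilde S_{1-x})=(S_{x^2}+Z_{11},\,S_{x-x^2}+Z_{12},\,S_{1-x}+Z_{13})$ satisfies $\varepsilon_1$-differential privacy.
   Context: $\mathrm{Lap}(b)$ denotes the zero-mean Laplace distribution with density $\frac{1}{2b}e^{-|z|/b}$. Two datasets are neighboring ($D\sim D'$) if one is obtained from the other by adding or removing a single record in $[0,1]^2$. A randomized mechanism $\mathcal{M}$ satisfies $\varepsilon$-differential privacy (pure DP) if for all neighboring $D\sim D'$ and all measurable sets $S$ of outputs, $\Pr[\mathcal{M}(D)\in S]\le e^{\varepsilon}\Pr[\mathcal{M}(D')\in S]$. *)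

theory Defs
  imports "HOL-Probability.Probability"
begin

definition laplace_density :: "real \<Rightarrow> real \<Rightarrow> real" where
  "laplace_density b z = exp (- \<bar>z\<bar> / b) / (2 * b)"

definition laplace_measure :: "real \<Rightarrow> real measure" where
  "laplace_measure b = density lborel (\<lambda>z. ennreal (laplace_density b z))"

definition valid_dataset :: "(real \<times> real) multiset \<Rightarrow> bool" where
  "valid_dataset D \<longleftrightarrow> (\<forall>r \<in># D. fst r \<in> {0..1} \<and> snd r \<in> {0..1})"

definition neighboring :: "(real \<times> real) multiset \<Rightarrow> (real \<times> real) multiset \<Rightarrow> bool" where
  "neighboring D D' \<longleftrightarrow> valid_dataset D \<and> valid_dataset D' \<and>
     (\<exists>r. fst r \<in> {0..1} \<and> snd r \<in> {0..1} \<and> (D' = D + {#r#} \<or> D = D' + {#r#}))"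

definition S_x2 :: "(real \<times> real) multiset \<Rightarrow> real" where
  "S_x2 D = (\<Sum>r\<in>#D. (fst r)\<^sup>2)"

definition S_x_minus_x2 :: "(real \<times> real) multiset \<Rightarrow> real" where
  "S_x_minus_x2 D = (\<Sum>r\<in>#D. fst r - (fst r)\<^sup>2)"

definition S_1_minus_x :: "(real \<times> real) multiset \<Rightarrow> real" where
  "S_1_minus_x D = (\<Sum>r\<in>#D. 1 - fst r)"

definition mech :: "real \<Rightarrow> (real \<times> real) multiset \<Rightarrow> (real \<times> real \<times> real) measure" where
  "mech eps1 D = distr
     (laplace_measure (1/eps1) \<Otimes>\<^sub>M (laplace_measure (1/eps1) \<Otimes>\<^sub>M laplace_measure (1/eps1)))
     borel
     (\<lambda>(z1, z2, z3). (S_x2 D + z1, S_x_minus_x2 D + z2, S_1_minus_x D + z3))"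

definition pure_dp :: "real \<Rightarrow> ('d \<Rightarrow> 'd \<Rightarrow> bool) \<Rightarrow> ('d \<Rightarrow> 'o measure) \<Rightarrow> bool" where
  "pure_dp eps nb M \<longleftrightarrow>
     (\<forall>D D'. nb D D' \<longrightarrow> (\<forall>S \<in> sets (M D). emeasure (M D) S \<le> ennreal (exp eps) * emeasure (M D') S))"

end

theory Submission
  imports Defs
begin

definition lap3 :: "real \<Rightarrow> real \<times> real \<times> real \<Rightarrow> ennreal" where
  "lap3 b z = ennreal (laplace_density b (fst z)) * (ennreal (laplace_density b (fst (snd z)))
     * ennreal (laplace_density b (snd (snd z))))"

lemma laplace_density_meas[measurable]: "laplace_density b \<in> borel_measurable borel"
  unfolding laplace_density_def by measurable

lemma lap3_meas[measurable]: "lap3 b \<in> borel_measurable borel"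
  unfolding lap3_def by (simp add: borel_prod[symmetric]) measurable

lemma prod_lap: "laplace_measure b \<Otimes>\<^sub>M (laplace_measure b \<Otimes>\<^sub>M laplace_measure b)
   = density lborel (lap3 b)"
proof -
  let ?g = "\<lambda>z. ennreal (laplace_density b z)"
  have sf: "sigma_finite_measure (density lborel ?g)"
    by (subst sigma_finite_measure.sigma_finite_iff_density_finite[OF sigma_finite_lborel]) auto
  have inner: "laplace_measure b \<Otimes>\<^sub>M laplace_measure b
      = density (lborel :: (real \<times> real) measure) (\<lambda>(x,y). ?g x * ?g y)"
    unfolding laplace_measure_def
    by (subst pair_measure_density) (auto simp: lborel_prod sf sigma_finite_lborel)
  have m2: "(\<lambda>(x, y). ?g x * ?g y) \<in> borel_measurable (borel :: (real \<times> real) measure)"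
    by (simp add: borel_prod[symmetric]) measurable
  have sf2: "sigma_finite_measure (density (lborel :: (real \<times> real) measure) (\<lambda>(x,y). ?g x * ?g y))"
  proof (subst sigma_finite_measure.sigma_finite_iff_density_finite[OF sigma_finite_lborel])
    show "(\<lambda>(x, y). ?g x * ?g y) \<in> borel_measurable (lborel :: (real \<times> real) measure)"
      using m2 by simp
  qed (auto simp: ennreal_mult_eq_top_iff)
  show ?thesis
    unfolding inner
    apply (subst laplace_measure_def)
    apply (subst pair_measure_density)
    using sf2 m2 apply (auto simp: lborel_prod sigma_finite_lborel)
    apply (rule arg_cong[where f="density lborel"])
    apply (auto simp: lap3_def fun_eq_iff split: prod.splits)
    done
qed

definition shiftD :: "(real \<times> real) multiset \<Rightarrow> real \<times> real \<times> real" where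
  "shiftD D = (S_x2 D, S_x_minus_x2 D, S_1_minus_x D)"

lemma mech_density: "mech eps D = density lborel (\<lambda>y. lap3 (1/eps) (y - shiftD D))"
proof -
  let ?a = "shiftD D"
  have f: "(\<lambda>(z1, z2, z3). (S_x2 D + z1, S_x_minus_x2 D + z2, S_1_minus_x D + z3)) = (+) ?a"
    by (auto simp: fun_eq_iff shiftD_def)
  have "mech eps D = distr (density lborel (lap3 (1/eps))) borel ((+) ?a)"
    unfolding mech_def prod_lap f ..
  also have "\<dots> = distr (density lborel (\<lambda>x. lap3 (1/eps) ((?a + x) - ?a))) borel ((+) ?a)"
    by simp
  also have "\<dots> = density (distr lborel borel ((+) ?a)) (\<lambda>y. lap3 (1/eps) (y - ?a))"
    by (rule density_distr[symmetric]) auto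
  also have "\<dots> = density lborel (\<lambda>y. lap3 (1/eps) (y - ?a))"
    by (simp add: lborel_distr_plus)
  finally show ?thesis .
qed

lemma sens:
  assumes "neighboring D D'"
  shows "\<bar>S_x2 D - S_x2 D'\<bar> + \<bar>S_x_minus_x2 D - S_x_minus_x2 D'\<bar> + \<bar>S_1_minus_x D - S_1_minus_x D'\<bar> \<le> 1"
proof -
  obtain r where r: "fst r \<in> {0..1}" "D' = D + {#r#} \<or> D = D' + {#r#}"
    using assms unfolding neighboring_def by blast
  have h: "fst r - (fst r)^2 \<ge> 0" using r(1) by (auto simp: power2_eq_square intro: mult_left_le_one_le)
  show ?thesis using r(2)
  proof
    assume "D' = D + {#r#}"
    then show ?thesis using r(1) h by (simp add: S_x2_def S_x_minus_x2_def S_1_minus_x_def)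
  next
    assume "D = D' + {#r#}"
    then show ?thesis using r(1) h by (simp add: S_x2_def S_x_minus_x2_def S_1_minus_x_def)
  qed
qed

lemma lap3_eq:
  assumes "eps > 0"
  shows "lap3 (1/eps) z = ennreal ((eps/2)^3 * exp (- eps * (\<bar>fst z\<bar> + \<bar>fst (snd z)\<bar> + \<bar>snd (snd z)\<bar>)))"
proof -
  have l: "laplace_density (1/eps) t = eps/2 * exp (- eps * \<bar>t\<bar>)" for t
    using assms by (simp add: laplace_density_def field_simps)
  have p: "\<And>t. 0 \<le> eps/2 * exp (- eps * \<bar>t\<bar>)" using assms by simp
  have "lap3 (1/eps) z = ennreal (eps/2 * exp (- eps * \<bar>fst z\<bar>) * (eps/2 * exp (- eps * \<bar>fst (snd z)\<bar>)
     * (eps/2 * exp (- eps * \<bar>snd (snd z)\<bar>))))"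
    unfolding lap3_def l
    by (subst ennreal_mult[OF p mult_nonneg_nonneg[OF p p]], subst ennreal_mult[OF p p], rule refl)
  also have "eps/2 * exp (- eps * \<bar>fst z\<bar>) * (eps/2 * exp (- eps * \<bar>fst (snd z)\<bar>)
     * (eps/2 * exp (- eps * \<bar>snd (snd z)\<bar>))) = (eps/2)^3 * (exp (- eps * \<bar>fst z\<bar>) *
      exp (- eps * \<bar>fst (snd z)\<bar>) * exp (- eps * \<bar>snd (snd z)\<bar>))"
    by (simp add: power3_eq_cube)
  also have "exp (- eps * \<bar>fst z\<bar>) * exp (- eps * \<bar>fst (snd z)\<bar>) * exp (- eps * \<bar>snd (snd z)\<bar>)
     = exp (- eps * (\<bar>fst z\<bar> + \<bar>fst (snd z)\<bar> + \<bar>snd (snd z)\<bar>))"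
    by (simp add: exp_add[symmetric] distrib_left)
  finally show ?thesis .
qed

lemma lap3_ratio:
  assumes "eps > 0"
    and "\<bar>fst a - fst a'\<bar> + \<bar>fst (snd a) - fst (snd a')\<bar> + \<bar>snd (snd a) - snd (snd a')\<bar> \<le> 1"
  shows "lap3 (1/eps) (y - a) \<le> ennreal (exp eps) * lap3 (1/eps) (y - a')"
proof -
  define U where "U = \<bar>fst y - fst a\<bar> + \<bar>fst (snd y) - fst (snd a)\<bar> + \<bar>snd (snd y) - snd (snd a)\<bar>"
  define V where "V = \<bar>fst y - fst a'\<bar> + \<bar>fst (snd y) - fst (snd a')\<bar> + \<bar>snd (snd y) - snd (snd a')\<bar>"
  have UV: "V \<le> 1 + U" using assms(2) unfolding U_def V_def by linarith
  have "- eps * U \<le> eps + - eps * V"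
    using mult_left_mono[OF UV, of eps] assms(1) by (simp add: algebra_simps)
  then have "exp (- eps * U) \<le> exp eps * exp (- eps * V)"
    by (simp add: exp_add[symmetric])
  then have "(eps/2)^3 * exp (- eps * U) \<le> exp eps * ((eps/2)^3 * exp (- eps * V))"
    using assms(1) by (simp add: mult.left_commute)
  then show ?thesis
    using assms(1) unfolding lap3_eq[OF assms(1)] U_def V_def
    by (simp add: ennreal_mult[symmetric] ennreal_leI)
qed

theorem mainTheorem3:
  fixes eps1 :: real
  assumes "eps1 > 0"
  shows "pure_dp eps1 neighboring (mech eps1)"
  unfolding pure_dp_def
proof (intro allI impI ballI)
  fix D D' S
  assume nb: "neighboring D D'" and S: "S \<in> sets (mech eps1 D)"
  then have S': "S \<in> sets lborel" by (simp add: mech_density)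
  have pt: "lap3 (1/eps1) (y - shiftD D) \<le> ennreal (exp eps1) * lap3 (1/eps1) (y - shiftD D')" for y
    by (rule lap3_ratio[OF assms]) (use sens[OF nb] in \<open>simp add: shiftD_def\<close>)
  have "emeasure (mech eps1 D) S = (\<integral>\<^sup>+ y. lap3 (1/eps1) (y - shiftD D) * indicator S y \<partial>lborel)"
    using S' by (simp add: mech_density emeasure_density)
  also have "\<dots> \<le> (\<integral>\<^sup>+ y. ennreal (exp eps1) * (lap3 (1/eps1) (y - shiftD D') * indicator S y) \<partial>lborel)"
    by (intro nn_integral_mono) (auto simp: indicator_def pt)
  also have "\<dots> = ennreal (exp eps1) * (\<integral>\<^sup>+ y. lap3 (1/eps1) (y - shiftD D') * indicator S y \<partial>lborel)"
    using S' by (intro nn_integral_cmult) auto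
  also have "\<dots> = ennreal (exp eps1) * emeasure (mech eps1 D') S"
    using S' by (simp add: mech_density emeasure_density)
  finally show "emeasure (mech eps1 D) S \<le> ennreal (exp eps1) * emeasure (mech eps1 D') S" .
qed

end
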